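(* Let $\beta>0$, $t>0$ and let $\gamma$ be a path in the time interval $[0,t]$ with at most $\beta t$ jumps. Then there are at least $\frac{\sqrt t}{4}-1$ disjoint time intervals contained in $[0,\frac t2]$ that are favorable for $\gamma$.
   Context: A path in the time interval $[0,t]$ is a finite sequence of space-time points in $\mathbb{Z}\times[0,t]$ with nondecreasing times, whose consecutive segments are either vertical (same site) or horizontal jumps between neighbouring sites at a fixed time; its jumps are these horizontal segments. A time interval $[s-\sqrt t,s)\subseteq[0,t]$ is favorable for $\gamma$ if for every $u\in[s-\sqrt t,s)$ the number of jumps of $\gamma$ during $[u,s)$ is at most $4\beta|s-u|$. *)

theory Defs
  imports Complex_Main
begin

text \<open>A path is a finite list of space-time points (site, time) in Z x [0,t];
  times are nondecreasing and consecutive segments are vertical (same site) or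
  horizontal jumps between neighbouring sites at a fixed time.\<close>

definition is_jump :: "(int \<times> real) list \<Rightarrow> nat \<Rightarrow> bool" where
  "is_jump \<gamma> i \<longleftrightarrow> snd (\<gamma> ! i) = snd (\<gamma> ! Suc i) \<and> \<bar>fst (\<gamma> ! i) - fst (\<gamma> ! Suc i)\<bar> = 1"

definition is_path :: "real \<Rightarrow> (int \<times> real) list \<Rightarrow> bool" where
  "is_path t \<gamma> \<longleftrightarrow> \<gamma> \<noteq> [] \<and> (\<forall>p\<in>set \<gamma>. 0 \<le> snd p \<and> snd p \<le> t) \<and>
     (\<forall>i. Suc i < length \<gamma> \<longrightarrow> snd (\<gamma> ! i) \<le> snd (\<gamma> ! Suc i) \<and>
        (fst (\<gamma> ! i) = fst (\<gamma> ! Suc i) \<or> is_jump \<gamma> i))"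

definition jumps_in :: "(int \<times> real) list \<Rightarrow> real set \<Rightarrow> nat" where
  "jumps_in \<gamma> A = card {i. Suc i < length \<gamma> \<and> is_jump \<gamma> i \<and> snd (\<gamma> ! i) \<in> A}"

definition num_jumps :: "(int \<times> real) list \<Rightarrow> nat" where
  "num_jumps \<gamma> = jumps_in \<gamma> UNIV"

definition favorable :: "real \<Rightarrow> real \<Rightarrow> (int \<times> real) list \<Rightarrow> real \<Rightarrow> bool" where
  "favorable \<beta> t \<gamma> s \<longleftrightarrow> {s - sqrt t..<s} \<subseteq> {0..t} \<and>
     (\<forall>u\<in>{s - sqrt t..<s}. real (jumps_in \<gamma> {u..<s}) \<le> 4 * \<beta> * \<bar>s - u\<bar>)"

end

theory Submission
  imports Defs
begin

lemma jumps_in_mono: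
  assumes "A \<subseteq> B" shows "jumps_in \<gamma> A \<le> jumps_in \<gamma> B"
  unfolding jumps_in_def
  by (rule card_mono) (auto intro: finite_subset[of _ "{..<length \<gamma>}"] simp: subset_iff dest: set_mp[OF assms])

lemma jumps_in_split:
  assumes "u \<le> s"
  shows "jumps_in \<gamma> {..<s} = jumps_in \<gamma> {..<u} + jumps_in \<gamma> {u..<s}"
proof -
  let ?P = "\<lambda>A. {i. Suc i < length \<gamma> \<and> is_jump \<gamma> i \<and> snd (\<gamma> ! i) \<in> A}"
  have e: "?P {..<s} = ?P {..<u} \<union> ?P {u..<s}" using assms by auto
  have f: "\<And>A. finite (?P A)" by (rule finite_subset[of _ "{..<length \<gamma>}"]) auto
  have "card (?P {..<u} \<union> ?P {u..<s}) = card (?P {..<u}) + card (?P {u..<s})"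
    using f[of "{..<u}"] f[of "{u..<s}"] by (intro card_Un_disjoint) auto
  then show ?thesis unfolding jumps_in_def using e by simp
qed

lemma jumps_le_num: "jumps_in \<gamma> A \<le> num_jumps \<gamma>"
  unfolding num_jumps_def by (rule jumps_in_mono) simp

theorem lemma8:
  fixes \<beta> t :: real and \<gamma> :: "(int \<times> real) list"
  assumes "\<beta> > 0" and "t > 0" and "is_path t \<gamma>"
    and "real (num_jumps \<gamma>) \<le> \<beta> * t"
  shows "\<exists>S :: real set. finite S \<and> real (card S) \<ge> sqrt t / 4 - 1 \<and>
    (\<forall>s\<in>S. {s - sqrt t..<s} \<subseteq> {0..t/2} \<and> favorable \<beta> t \<gamma> s) \<and>
    (\<forall>s\<in>S. \<forall>s'\<in>S. s \<noteq> s' \<longrightarrow> {s - sqrt t..<s} \<inter> {s' - sqrt t..<s'} = {})"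
proof -
  define L where "L = sqrt t"
  have L0: "L > 0" using assms(2) by (simp add: L_def)
  have LL: "L * L = t" using assms(2) by (simp add: L_def)
  define m where "m = num_jumps \<gamma>"
  define N where "N x = real (jumps_in \<gamma> {..<x})" for x
  define F where "F x = 4 * \<beta> * x - N x" for x
  have Nmono: "N x \<le> N u" if "x \<le> u" for x u
    unfolding N_def using jumps_in_mono[of "{..<x}" "{..<u}" \<gamma>] that by auto
  have Nm: "N x \<le> m" for x unfolding N_def m_def using jumps_le_num by simp
  have N0: "N x \<ge> 0" for x by (simp add: N_def)
  define C where "C y = {(y + real k) / (4 * \<beta>) | k. k \<le> m \<and> F ((y + real k) / (4 * \<beta>)) \<ge> y}" for y
  define \<tau> where "\<tau> y = Min (C y)" for y
  have finC: "finite (C y)" for y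
  proof -
    have "C y \<subseteq> (\<lambda>k. (y + real k) / (4 * \<beta>)) ` {..m}" unfolding C_def by auto
    then show ?thesis by (rule finite_subset) simp
  qed
  have A: "C y \<noteq> {} \<and> \<tau> y \<le> u" if "F u \<ge> y" for y u
  proof -
    obtain k where k: "N u = real k" "k \<le> m" unfolding N_def m_def
      using jumps_le_num by blast
    define x where "x = (y + real k) / (4 * \<beta>)"
    have "4 * \<beta> * u \<ge> y + k" using that k by (simp add: F_def)
    then have xu: "x \<le> u" using assms(1) by (simp add: x_def field_simps)
    have "N x \<le> k" using Nmono[OF xu] k by simp
    then have "F x \<ge> y" using assms(1) by (simp add: F_def x_def)
    then have xC: "x \<in> C y" unfolding C_def x_def using k by blast
    then have "\<tau> y \<le> x" unfolding \<tau>_def by (simp add: finC)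
    with xC xu show ?thesis by auto
  qed
  have B: "F (\<tau> y) \<ge> y" if "\<exists>u. F u \<ge> y" for y
  proof -
    from that A have ne: "C y \<noteq> {}" by blast
    have "\<tau> y \<in> C y" unfolding \<tau>_def using Min_in[OF finC ne] .
    then show ?thesis unfolding C_def by auto
  qed
  have Fshift: "F x \<ge> F s - 4 * \<beta> * (s - x)" if "x \<le> s" for x s
    using Nmono[OF that] by (simp add: F_def algebra_simps)
  define K where "K = nat \<lfloor>L / 4\<rfloor>"
  define y where "y j = 4 * \<beta> * real j * L" for j :: nat
  define s where "s j = \<tau> (y j)" for j
  have Fhalf: "F (t/2) \<ge> \<beta> * t" using Nm[of "t/2"] assms(4) by (simp add: F_def m_def)
  have yle: "y j \<le> \<beta> * t" if "j \<le> K" for j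
  proof -
    have "real j \<le> L / 4" using that L0 unfolding K_def by linarith
    then have "real j * L \<le> L * L / 4" using L0 by (simp add: mult_right_mono field_simps)
    then have "4 * \<beta> * (real j * L) \<le> 4 * \<beta> * (L * L / 4)" using assms(1) by simp
    then show ?thesis using LL by (simp add: y_def)
  qed
  have ex: "\<exists>u. F u \<ge> y j" if "j \<le> K" for j using Fhalf yle[OF that] order_trans by blast
  have Fs: "F (s j) \<ge> y j" if "j \<le> K" for j unfolding s_def using B[OF ex[OF that]] .
  have sup: "s j \<le> t/2" if "j \<le> K" for j
    unfolding s_def using A[of "y j" "t/2"] Fhalf yle[OF that] by linarith
  have slow: "s j \<ge> L" if "j \<le> K" "j \<ge> 1" for j
  proof -
    have "4 * \<beta> * s j \<ge> y j" using Fs[OF that(1)] N0[of "s j"] by (simp add: F_def)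
    then have "s j \<ge> real j * L" using assms(1) by (simp add: y_def field_simps)
    moreover have "real j * L \<ge> L" using that(2) L0 by simp
    ultimately show ?thesis by simp
  qed
  have rec: "F u < y j" if "u < s j" for u j
    using A[of "y j" u] that unfolding s_def by force
  have sep: "s i \<le> s j - L" if "i < j" "j \<le> K" for i j
  proof -
    have "F (s j - L) \<ge> F (s j) - 4 * \<beta> * L" using Fshift[of "s j - L" "s j"] L0 by simp
    moreover have "y j - 4 * \<beta> * L \<ge> y i"
    proof -
      have "real j - 1 \<ge> real i" using that by simp
      then have "4 * \<beta> * L * (real j - 1) \<ge> 4 * \<beta> * L * real i"
        using assms(1) L0 by (intro mult_left_mono) auto
      then show ?thesis by (simp add: y_def algebra_simps)
    qed
    ultimately have "F (s j - L) \<ge> y i" using Fs[OF that(2)] by linarith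
    then show ?thesis using rec[of "s j - L" i] by force
  qed
  have fav: "favorable \<beta> t \<gamma> (s j)" if "j \<le> K" "j \<ge> 1" for j
    unfolding favorable_def L_def[symmetric]
  proof (intro conjI ballI)
    show "{s j - L..<s j} \<subseteq> {0..t}" using slow[OF that] sup[OF that(1)] assms(2) by auto
    fix u assume u: "u \<in> {s j - L..<s j}"
    have "F u < F (s j)" using rec[of u j] u Fs[OF that(1)] by auto
    then have "N (s j) - N u < 4 * \<beta> * (s j - u)" by (simp add: F_def algebra_simps)
    moreover have "N (s j) = N u + real (jumps_in \<gamma> {u..<s j})"
      using jumps_in_split[of u "s j" \<gamma>] u unfolding N_def by simp
    ultimately show "real (jumps_in \<gamma> {u..<s j}) \<le> 4 * \<beta> * \<bar>s j - u\<bar>" using u by simp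
  qed
  define S where "S = s ` {1..K}"
  have inj: "inj_on s {1..K}"
  proof (rule inj_onI)
    fix i j assume "i \<in> {1..K}" "j \<in> {1..K}" "s i = s j"
    then show "i = j" using sep[of i j] sep[of j i] L0
      by (cases i j rule: linorder_cases) auto
  qed
  have card: "card S = K" unfolding S_def using card_image[OF inj] by simp
  have "real K \<ge> L / 4 - 1" unfolding K_def using L0 by linarith
  moreover have "\<forall>a\<in>S. {a - sqrt t..<a} \<subseteq> {0..t/2} \<and> favorable \<beta> t \<gamma> a"
    unfolding S_def L_def[symmetric] using slow sup fav by fastforce
  moreover have "\<forall>a\<in>S. \<forall>b\<in>S. a \<noteq> b \<longrightarrow> {a - sqrt t..<a} \<inter> {b - sqrt t..<b} = {}"
  proof (intro ballI impI)
    fix a b assume "a \<in> S" "b \<in> S" "a \<noteq> b"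
    then obtain i j where ij: "i \<in> {1..K}" "j \<in> {1..K}" "a = s i" "b = s j" unfolding S_def by auto
    with \<open>a \<noteq> b\<close> have "i \<noteq> j" by auto
    then have "i < j \<or> j < i" by linarith
    then have "a \<le> b - L \<or> b \<le> a - L" using sep ij by auto
    then show "{a - sqrt t..<a} \<inter> {b - sqrt t..<b} = {}" unfolding L_def[symmetric] by auto
  qed
  ultimately show ?thesis using card unfolding S_def L_def
    by (intro exI[of _ S]) (simp add: S_def L_def)
qed

end
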